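(* Fix $\lambda_t \in \mathbb{R}^m_+$. For each deterministic policy $\pi \in \Pi$ define $\mathcal{T}^\pi:\mathbb{R}^{\mathcal{S}}\to\mathbb{R}^{\mathcal{S}}$ by $$[\mathcal{T}^{\pi} v](s) = (r - \lambda_t^{\top}g)(s, \pi(s)) + \gamma \langle P^o_{s, \pi(s)}, v \rangle + \gamma \min_{P \in \mathcal{P}} \langle P_{s, \pi(s)} - P^o_{s, \pi(s)}, V^{\pi}_{r} \rangle - \gamma \lambda_t^{\top} \min_{P \in \mathcal{P}} \langle P_{s, \pi(s)} - P^o_{s, \pi(s)}, V^{\pi}_{g} \rangle,$$ where $(r-\lambda_t^\top g)(s,a) = r(s,a) - \lambda_t^\top g(s,a)$ and the second minimum is taken componentwise over $g_1,\dots,g_m$, and define $[\mathcal{T}^* v](s) = \max_{\pi \in \Pi}[\mathcal{T}^\pi v](s)$. Then: (1) (Monotonicity) if $v_1,v_2 \in \mathbb{R}^{\mathcal{S}}$ with $v_1 \ge v_2$ componentwise, then $\mathcal{T}^\pi v_1 \ge \mathcal{T}^\pi v_2$ and $\mathcal{T}^* v_1 \ge \mathcal{T}^* v_2$; (2) (Transition invariance) for every $c\in\mathbb{R}$, $\mathcal{T}^\pi(v + c\mathbf{1}) = \mathcal{T}^\pi v + \gamma c\mathbf{1}$ and $\mathcal{T}^*(v + c\mathbf{1}) = \mathcal{T}^* v + \gamma c\mathbf{1}$; (3) (Contraction) $\mathcal{T}^\pi$ and $\mathcal{T}^*$ are $\gamma$-contractions in $\|\cdot\|_\infty$, and $V^\pi_r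 - \lambda_t^\top V^\pi_g$ is the unique fixed point of $\mathcal{T}^\pi$.
   Context: $\mathcal{S},\mathcal{A}$ are finite, $\gamma\in[0,1)$. $P^o = (P^o_{s,a})$ is a nominal kernel, and $\mathcal{P} = \otimes_{(s,a)}\mathcal{P}_{s,a}$ is an $(s,a)$-rectangular uncertainty set with $\mathcal{P}_{s,a} = \{P\in\Delta(\mathcal{S}) : D(P,P^o_{s,a})\le\beta_{s,a}\}$ for a function $D$ and levels $\beta_{s,a}$ (minima over these sets taken to be attained); $\min_{P\in\mathcal{P}}\langle P_{s,a}, w\rangle$ means $\min_{P_{s,a}\in\mathcal{P}_{s,a}}\langle P_{s,a},w\rangle$. $r:\mathcal{S}\times\mathcal{A}\to[0,\bar R]$ is a reward, $g=(g_1,\dots,g_m)$ with $g_i:\mathcal{S}\times\mathcal{A}\to[0,\tau_i]$ are constraint rewards. $\Pi$ is the set of deterministic stationary policies $\pi:\mathcal{S}\to\mathcal{A}$. For a reward $u$, $V^\pi_u(s) = \min_{\mathcal{K}\in\otimes_{t\ge0}\mathcal{P}}\mathbb{E}_{\mathcal{K}}[\sum_{t\ge0}\gamma^t u(s_t,a_t)\mid s_0=s,\pi]$ is the robust value function (worst case over sequences of kernels from $\mathcal{P}$, one per time step); $V^\pi_g = (V^\pi_{g_1},\dots,V^\pi_{g_m})^\top$. In the definition of $\mathcal{T}^\pi$, $V^\pi_r$ and $V^\pi_g$ are fixed (they depend on $\pi$, not on $v$). *)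

theory Defs
  imports "HOL-Analysis.Analysis"
begin

definition prob_simplex :: "('s::finite \<Rightarrow> real) set" where
  "prob_simplex = {p. (\<forall>s. 0 \<le> p s) \<and> sum p UNIV = 1}"

definition inner_s :: "('s::finite \<Rightarrow> real) \<Rightarrow> ('s \<Rightarrow> real) \<Rightarrow> real" where
  "inner_s p w = (\<Sum>s'\<in>UNIV. p s' * w s')"

definition Pset :: "(('s::finite \<Rightarrow> real) \<Rightarrow> ('s \<Rightarrow> real) \<Rightarrow> real) \<Rightarrow> ('s \<Rightarrow> 'a \<Rightarrow> real)
    \<Rightarrow> ('s \<Rightarrow> 'a \<Rightarrow> 's \<Rightarrow> real) \<Rightarrow> 's \<Rightarrow> 'a \<Rightarrow> ('s \<Rightarrow> real) set" where
  "Pset D \<beta> Po s a = {p \<in> prob_simplex. D p (Po s a) \<le> \<beta> s a}"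

definition diff_min where
  "diff_min D \<beta> Po s a w =
     Inf ((\<lambda>p. inner_s (\<lambda>s'. p s' - Po s a s') w) ` Pset D \<beta> Po s a)"

fun occ :: "(nat \<Rightarrow> 's::finite \<Rightarrow> 'a \<Rightarrow> 's \<Rightarrow> real) \<Rightarrow> ('s \<Rightarrow> 'a) \<Rightarrow> 's \<Rightarrow> nat \<Rightarrow> 's \<Rightarrow> real" where
  "occ K \<pi> s0 0 s' = (if s' = s0 then 1 else 0)"
| "occ K \<pi> s0 (Suc t) s' = (\<Sum>s\<in>UNIV. occ K \<pi> s0 t s * K t s (\<pi> s) s')"

definition disc_return :: "real \<Rightarrow> (nat \<Rightarrow> 's::finite \<Rightarrow> 'a \<Rightarrow> 's \<Rightarrow> real) \<Rightarrow> ('s \<Rightarrow> 'a)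
    \<Rightarrow> ('s \<Rightarrow> 'a \<Rightarrow> real) \<Rightarrow> 's \<Rightarrow> real" where
  "disc_return \<gamma> K \<pi> u s0 = (\<Sum>t. \<gamma> ^ t * (\<Sum>s\<in>UNIV. occ K \<pi> s0 t s * u s (\<pi> s)))"

text \<open>Kernel sequences from the rectangular set, one kernel per time step.\<close>
definition admissible where
  "admissible D \<beta> Po K = (\<forall>t s a. K t s a \<in> Pset D \<beta> Po s a)"

definition robust_V where
  "robust_V D \<beta> Po \<gamma> \<pi> u s =
     Inf {disc_return \<gamma> K \<pi> u s | K. admissible D \<beta> Po K}"

text \<open>The operator T^pi (lambda_t given as lam, constraints g 0 .. g (m-1)).\<close>
definition Tpi where
  "Tpi D \<beta> Po \<gamma> r g m lam \<pi> v s =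
     (r s (\<pi> s) - (\<Sum>i<m. lam i * g i s (\<pi> s)))
     + \<gamma> * inner_s (Po s (\<pi> s)) v
     + \<gamma> * diff_min D \<beta> Po s (\<pi> s) (robust_V D \<beta> Po \<gamma> \<pi> r)
     - \<gamma> * (\<Sum>i<m. lam i * diff_min D \<beta> Po s (\<pi> s) (robust_V D \<beta> Po \<gamma> \<pi> (g i)))"

definition Tstar where
  "Tstar D \<beta> Po \<gamma> r g m lam v s =
     Max (range (\<lambda>\<pi>::'s::finite \<Rightarrow> 'a::finite. Tpi D \<beta> Po \<gamma> r g m lam \<pi> v s))"

definition supnorm :: "('s::finite \<Rightarrow> real) \<Rightarrow> real" where
  "supnorm f = Max (range (\<lambda>s. \<bar>f s\<bar>))"

end

theory Submission imports Defs begin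

lemma inner_s_diff: "inner_s p w - inner_s p w' = inner_s p (\<lambda>s. w s - w' s)"
  by (simp add: inner_s_def sum_subtractf right_diff_distrib)

lemma inner_s_diff1: "inner_s (\<lambda>s. p s - q s) w = inner_s p w - inner_s q w"
  by (simp add: inner_s_def sum_subtractf left_diff_distrib)

lemma inner_s_constfun: "p \<in> prob_simplex \<Longrightarrow> inner_s p (\<lambda>s. c) = c"
  unfolding inner_s_def prob_simplex_def by (simp add: sum_distrib_right[symmetric])

lemma inner_s_const: "p \<in> prob_simplex \<Longrightarrow> inner_s p (\<lambda>s. w s + c) = inner_s p w + c"
proof -
  assume "p \<in> prob_simplex"
  then have "inner_s p (\<lambda>s. c) = c" by (rule inner_s_constfun)
  then show ?thesis unfolding inner_s_def by (simp add: distrib_left sum.distrib)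
qed

lemma inner_s_mono: "(\<And>s. 0 \<le> p s) \<Longrightarrow> (\<And>s. w s \<le> w' s) \<Longrightarrow> inner_s p w \<le> inner_s p w'"
  unfolding inner_s_def by (intro sum_mono mult_left_mono) auto

lemma inner_s_bound: assumes "p \<in> prob_simplex" "\<And>s. \<bar>w s\<bar> \<le> d" shows "\<bar>inner_s p w\<bar> \<le> d"
proof -
  have nn: "\<And>s. 0 \<le> p s" using assms(1) by (simp add: prob_simplex_def)
  have b: "w s \<le> d" "- d \<le> w s" for s using assms(2)[of s] by (simp_all add: abs_le_iff)
  have "inner_s p w \<le> inner_s p (\<lambda>s. d)" by (rule inner_s_mono[OF nn]) (rule b(1))
  moreover have "inner_s p (\<lambda>s. - d) \<le> inner_s p w" by (rule inner_s_mono[OF nn]) (rule b(2))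
  ultimately show ?thesis using inner_s_constfun[OF assms(1)] by (simp add: abs_le_iff)
qed

lemma inner_s_lin: "inner_s p (\<lambda>s. a s + c * b s - d s) = inner_s p a + c * inner_s p b - inner_s p d"
  by (simp add: inner_s_def algebra_simps sum.distrib sum_subtractf sum_distrib_left)

lemma inner_s_sumlin: "inner_s p (\<lambda>s. a s - (\<Sum>i<m. l i * b i s)) = inner_s p a - (\<Sum>i<m. l i * inner_s p (b i))"
proof -
  have "(\<Sum>s\<in>UNIV. p s * (\<Sum>i<m. l i * b i s)) = (\<Sum>i<m. l i * (\<Sum>s\<in>UNIV. p s * b i s))"
    unfolding sum_distrib_left by (subst sum.swap) (simp add: mult_ac)
  then show ?thesis by (simp add: inner_s_def right_diff_distrib sum_subtractf)
qed

lemma supnorm_ge: "\<bar>f s\<bar> \<le> supnorm f"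
  unfolding supnorm_def by (rule Max_ge) auto

lemma supnorm_le: "(\<And>s. \<bar>f s\<bar> \<le> d) \<Longrightarrow> supnorm f \<le> d"
  unfolding supnorm_def by (subst Max_le_iff) auto

lemma Max_range_mono: "(\<And>x. f x \<le> g x) \<Longrightarrow> Max (range (f::'b::finite \<Rightarrow> real)) \<le> Max (range g)"
proof -
  assume h: "\<And>x. f x \<le> g x"
  have "f a \<le> Max (range g)" for a
  proof -
    have "g a \<le> Max (range g)" by (rule Max_ge) auto
    then show ?thesis using h[of a] by linarith
  qed
  then show ?thesis by (subst Max_le_iff) auto
qed

lemma Max_range_add: "Max (range (\<lambda>x. (f::'b::finite \<Rightarrow> real) x + c)) = Max (range f) + c"
  using Max_add_commute[of UNIV f c] by simp

lemma Max_range_contr: assumes "\<And>x. \<bar>(f::'b::finite \<Rightarrow> real) x - g x\<bar> \<le> d"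
  shows "\<bar>Max (range f) - Max (range g)\<bar> \<le> d"
proof -
  have b: "f x \<le> g x + d" "g x \<le> f x + d" for x using assms[of x] by (simp_all add: abs_le_iff)
  have "Max (range f) \<le> Max (range (\<lambda>x. g x + d))" by (rule Max_range_mono) (rule b(1))
  moreover have "Max (range g) \<le> Max (range (\<lambda>x. f x + d))" by (rule Max_range_mono) (rule b(2))
  ultimately have "Max (range f) \<le> Max (range g) + d" "Max (range g) \<le> Max (range f) + d"
    by (simp_all only: Max_range_add)
  then show ?thesis unfolding abs_le_iff by linarith
qed

lemma contraction_fix:
  fixes F :: "('s::finite \<Rightarrow> real) \<Rightarrow> ('s \<Rightarrow> real)" and \<gamma> :: real
  assumes g0: "0 \<le> \<gamma>" and g1: "\<gamma> < 1"
    and contr: "\<And>w w' d s. (\<forall>s. \<bar>w s - w' s\<bar> \<le> d) \<Longrightarrow> \<bar>F w s - F w' s\<bar> \<le> \<gamma> * d"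
  shows "\<exists>V. F V = V"
proof -
  define x where "x n = (F ^^ n) (\<lambda>_. 0)" for n
  define M where "M = supnorm (\<lambda>s. x 1 s - x 0 s)"
  have xS: "x (Suc n) = F (x n)" for n by (simp add: x_def)
  have M0: "0 \<le> M" unfolding M_def by (rule order_trans[OF abs_ge_zero supnorm_ge])
  have step: "\<bar>x (Suc n) s - x n s\<bar> \<le> \<gamma>^n * M" for n s
  proof (induction n arbitrary: s)
    case 0 then show ?case using supnorm_ge[of "\<lambda>s. x 1 s - x 0 s" s] by (simp add: M_def)
  next
    case (Suc n)
    have "\<bar>F (x (Suc n)) s - F (x n) s\<bar> \<le> \<gamma> * (\<gamma>^n * M)" by (rule contr) (use Suc in blast)
    then show ?case by (simp add: xS[of "Suc n"] xS[of n] mult.assoc)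
  qed
  define dd where "dd j s = x (Suc j) s - x j s" for j s
  have gs: "norm \<gamma> < 1" using g0 g1 by simp
  have sg: "summable (\<lambda>j. \<gamma>^j * M)" by (rule summable_mult2[OF summable_geometric[OF gs]])
  have sd: "summable (\<lambda>j. dd j s)" for s
    by (rule summable_comparison_test[OF _ sg]) (use step dd_def in auto)
  have xsum: "x n s = (\<Sum>j<n. dd j s)" for n s
    unfolding dd_def by (subst sum_lessThan_telescope) (simp add: x_def)
  define V where "V s = (\<Sum>j. dd j s)" for s
  define E where "E = M / (1 - \<gamma>)"
  have E0: "0 \<le> E" using M0 g1 by (simp add: E_def)
  have tail: "\<bar>V s - x n s\<bar> \<le> \<gamma>^n * E" for n s
  proof -
    have "V s = (\<Sum>j. dd (j + n) s) + x n s"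
      unfolding V_def xsum by (rule suminf_split_initial_segment[OF sd])
    then have eq: "V s - x n s = (\<Sum>j. dd (j + n) s)" by simp
    have s1: "summable (\<lambda>j. dd (j + n) s)" by (subst summable_iff_shift) (rule sd)
    have s2: "summable (\<lambda>j. \<gamma>^n * (\<gamma>^j * M))" by (rule summable_mult[OF sg])
    have bnd: "(\<Sum>j. \<gamma>^n * (\<gamma>^j * M)) = \<gamma>^n * E"
      using suminf_mult[OF sg, of "\<gamma>^n"] suminf_mult2[OF summable_geometric[OF gs], of M]
        suminf_geometric[OF gs] by (simp add: E_def)
    have b: "\<bar>dd (j + n) s\<bar> \<le> \<gamma>^n * (\<gamma>^j * M)" for j
      using step[of "j+n" s] by (simp add: dd_def power_add mult_ac)
    have "(\<Sum>j. dd (j + n) s) \<le> (\<Sum>j. \<gamma>^n * (\<gamma>^j * M))"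
      proof (rule suminf_le[OF _ s1 s2])
      fix j show "dd (j + n) s \<le> \<gamma>^n * (\<gamma>^j * M)" using b[of j] by (simp add: abs_le_iff)
    qed
    moreover have "(\<Sum>j. - (\<gamma>^n * (\<gamma>^j * M))) \<le> (\<Sum>j. dd (j + n) s)"
      proof (rule suminf_le[OF _ summable_minus[OF s2] s1])
      fix j show "- (\<gamma>^n * (\<gamma>^j * M)) \<le> dd (j + n) s" using b[of j] by (simp add: abs_le_iff)
    qed
    ultimately show ?thesis using eq bnd suminf_minus[OF s2] by (simp add: abs_le_iff)
  qed
  have "F V s = V s" for s
  proof -
    have b: "\<bar>F V s - V s\<bar> \<le> (2 * E * \<gamma>) * \<gamma>^n" for n
    proof -
      have "\<bar>F V s - F (x n) s\<bar> \<le> \<gamma> * (\<gamma>^n * E)"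
        by (rule contr) (use tail in auto)
      moreover have "\<bar>x (Suc n) s - V s\<bar> \<le> \<gamma>^(Suc n) * E" using tail[of s "Suc n"] by (simp add: abs_minus_commute)
      ultimately show ?thesis by (simp add: xS abs_le_iff algebra_simps)
    qed
    have "(\<lambda>n. (2 * E * \<gamma>) * \<gamma>^n) \<longlonglongrightarrow> 0"
      by (rule tendsto_mult_right_zero[OF LIMSEQ_power_zero[OF gs]])
    then have "\<bar>F V s - V s\<bar> \<le> 0" by (rule LIMSEQ_le_const) (use b in auto)
    then show ?thesis by simp
  qed
  then show ?thesis by blast
qed


lemma occ_simplex:
  assumes "\<And>t s a. K t s a \<in> prob_simplex"
  shows "occ K \<pi> s0 t \<in> prob_simplex"
proof (induction t)
  case 0 then show ?case by (simp add: prob_simplex_def)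
next
  case (Suc t)
  have nn: "0 \<le> occ K \<pi> s0 t s" "0 \<le> K t s a s'" for s a s'
    using Suc assms[of t s a] by (auto simp: prob_simplex_def)
  have "(\<Sum>s'\<in>UNIV. \<Sum>s\<in>UNIV. occ K \<pi> s0 t s * K t s (\<pi> s) s')
      = (\<Sum>s\<in>UNIV. occ K \<pi> s0 t s * (\<Sum>s'\<in>UNIV. K t s (\<pi> s) s'))"
    by (subst sum.swap) (simp add: sum_distrib_left)
  also have "\<dots> = 1" using assms Suc by (simp add: prob_simplex_def)
  finally show ?case using nn by (auto simp: prob_simplex_def intro!: sum_nonneg)
qed

lemma occ_Suc_inner: "inner_s (occ K \<pi> s0 (Suc n)) w = inner_s (occ K \<pi> s0 n) (\<lambda>s. inner_s (K n s (\<pi> s)) w)"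
  unfolding inner_s_def occ.simps sum_distrib_right sum_distrib_left
  by (subst sum.swap) (simp add: mult_ac)

lemma occ_0_inner: "inner_s (occ K \<pi> s0 0) w = w s0"
proof -
  have "(\<Sum>s'\<in>UNIV. occ K \<pi> s0 0 s' * w s') = (\<Sum>s'\<in>UNIV. if s' = s0 then w s0 else 0)"
    by (rule sum.cong) auto
  also have "\<dots> = w s0" by simp
  finally show ?thesis unfolding inner_s_def .
qed

lemma tel: "(\<Sum>t<n. \<gamma>^t * inner_s (occ K \<pi> s0 t) (\<lambda>s. u s (\<pi> s))) + \<gamma>^n * inner_s (occ K \<pi> s0 n) w - w s0
   = (\<Sum>t<n. \<gamma>^t * inner_s (occ K \<pi> s0 t) (\<lambda>s. u s (\<pi> s) + \<gamma> * inner_s (K t s (\<pi> s)) w - w s))"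
proof (induction n)
  case 0 then show ?case using occ_0_inner[of K \<pi> s0 w] by (simp del: occ.simps)
next
  case (Suc n)
  let ?I = "\<lambda>f. inner_s (occ K \<pi> s0 n) f"
  have e1: "\<gamma>^n * ?I (\<lambda>s. u s (\<pi> s) + \<gamma> * inner_s (K n s (\<pi> s)) w - w s)
     = \<gamma>^n * ?I (\<lambda>s. u s (\<pi> s)) + \<gamma>^(Suc n) * ?I (\<lambda>s. inner_s (K n s (\<pi> s)) w) - \<gamma>^n * ?I w"
    by (simp add: inner_s_lin algebra_simps)
  have e2: "inner_s (occ K \<pi> s0 (Suc n)) w = ?I (\<lambda>s. inner_s (K n s (\<pi> s)) w)"
    by (rule occ_Suc_inner)
  show ?case unfolding sum.lessThan_Suc e2 using Suc.IH e1 by linarith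
qed

locale rmdp =
  fixes D :: "('s::finite \<Rightarrow> real) \<Rightarrow> ('s \<Rightarrow> real) \<Rightarrow> real"
    and \<beta> :: "'s \<Rightarrow> 'a::finite \<Rightarrow> real"
    and Po :: "'s \<Rightarrow> 'a \<Rightarrow> 's \<Rightarrow> real"
    and \<gamma> :: real
  assumes g0: "0 \<le> \<gamma>" and g1: "\<gamma> < 1"
    and att: "\<And>s a w. \<exists>p\<in>Pset D \<beta> Po s a. \<forall>q\<in>Pset D \<beta> Po s a. inner_s p w \<le> inner_s q w"
begin

definition pm where
  "pm w s a = (SOME p. p \<in> Pset D \<beta> Po s a \<and> (\<forall>q\<in>Pset D \<beta> Po s a. inner_s p w \<le> inner_s q w))"

lemma pm_ex: "pm w s a \<in> Pset D \<beta> Po s a \<and> (\<forall>q\<in>Pset D \<beta> Po s a. inner_s (pm w s a) w \<le> inner_s q w)"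
proof -
  have "\<exists>p. p \<in> Pset D \<beta> Po s a \<and> (\<forall>q\<in>Pset D \<beta> Po s a. inner_s p w \<le> inner_s q w)"
    using att[of s a w] by blast
  then show ?thesis unfolding pm_def by (rule someI_ex)
qed

lemma pm_in: "pm w s a \<in> Pset D \<beta> Po s a" using pm_ex by blast
lemma pm_min: "q \<in> Pset D \<beta> Po s a \<Longrightarrow> inner_s (pm w s a) w \<le> inner_s q w" using pm_ex by blast

lemma Pset_simp: "p \<in> Pset D \<beta> Po s a \<Longrightarrow> p \<in> prob_simplex" by (simp add: Pset_def)

lemma diff_min_eq: "diff_min D \<beta> Po s a w = inner_s (pm w s a) w - inner_s (Po s a) w"
  unfolding diff_min_def
proof (rule cInf_eq_minimum)
  show "inner_s (pm w s a) w - inner_s (Po s a) w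
     \<in> (\<lambda>p. inner_s (\<lambda>s'. p s' - Po s a s') w) ` Pset D \<beta> Po s a"
    using pm_in by (auto simp: inner_s_diff1)
next
  fix x assume "x \<in> (\<lambda>p. inner_s (\<lambda>s'. p s' - Po s a s') w) ` Pset D \<beta> Po s a"
  then show "inner_s (pm w s a) w - inner_s (Po s a) w \<le> x"
    using pm_min by (auto simp: inner_s_diff1)
qed

definition B where "B \<pi> u w s = u s (\<pi> s) + \<gamma> * inner_s (pm w s (\<pi> s)) w"

lemma B_contr:
  assumes h: "\<forall>s. \<bar>w s - w' s\<bar> \<le> d"
  shows "\<bar>B \<pi> u w s - B \<pi> u w' s\<bar> \<le> \<gamma> * d"
proof -
  let ?p = "pm w s (\<pi> s)" and ?q = "pm w' s (\<pi> s)"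
  have 1: "inner_s ?p w \<le> inner_s ?q w" by (rule pm_min[OF pm_in])
  have 2: "inner_s ?q w' \<le> inner_s ?p w'" by (rule pm_min[OF pm_in])
  have 3: "\<bar>inner_s ?q (\<lambda>x. w x - w' x)\<bar> \<le> d"
    by (rule inner_s_bound[OF Pset_simp[OF pm_in]]) (use h in auto)
  have 4: "\<bar>inner_s ?p (\<lambda>x. w x - w' x)\<bar> \<le> d"
    by (rule inner_s_bound[OF Pset_simp[OF pm_in]]) (use h in auto)
  have 5: "\<bar>inner_s ?p w - inner_s ?q w'\<bar> \<le> d"
    using 1 2 3 4 inner_s_diff[of ?p w w'] inner_s_diff[of ?q w w'] by (simp add: abs_le_iff)
  have "B \<pi> u w s - B \<pi> u w' s = \<gamma> * (inner_s ?p w - inner_s ?q w')" by (simp add: B_def algebra_simps)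
  then have "\<bar>B \<pi> u w s - B \<pi> u w' s\<bar> = \<gamma> * \<bar>inner_s ?p w - inner_s ?q w'\<bar>" using g0 by (simp add: abs_mult)
  then show ?thesis using 5 g0 by (simp add: mult_left_mono)
qed

lemma fix_exists: "\<exists>V. B \<pi> u V = V"
  by (rule contraction_fix[OF g0 g1]) (rule B_contr)

lemma adm_simplex: "admissible D \<beta> Po K \<Longrightarrow> K t s a \<in> prob_simplex"
  by (simp add: admissible_def Pset_def)

lemma robust_fix:
  assumes fx: "B \<pi> u V = V"
  shows "robust_V D \<beta> Po \<gamma> \<pi> u = V"
proof (rule ext)
  fix s0
  define S where "S K n = (\<Sum>t<n. \<gamma>^t * inner_s (occ K \<pi> s0 t) (\<lambda>s. u s (\<pi> s))) + \<gamma>^n * inner_s (occ K \<pi> s0 n) V" for K n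
  define Mu where "Mu = supnorm (\<lambda>s. u s (\<pi> s))"
  define MV where "MV = supnorm V"
  have gs: "norm \<gamma> < 1" using g0 g1 by simp
  have Vfix: "V s = u s (\<pi> s) + \<gamma> * inner_s (pm V s (\<pi> s)) V" for s
    using fun_cong[OF fx, of s] by (simp add: B_def)
  have conv: "S K \<longlonglongrightarrow> disc_return \<gamma> K \<pi> u s0" if adm: "admissible D \<beta> Po K" for K
  proof -
    have os: "occ K \<pi> s0 t \<in> prob_simplex" for t by (rule occ_simplex) (rule adm_simplex[OF adm])
    have b1: "\<bar>inner_s (occ K \<pi> s0 t) (\<lambda>s. u s (\<pi> s))\<bar> \<le> Mu" for t
      by (rule inner_s_bound[OF os]) (use supnorm_ge[of "\<lambda>s. u s (\<pi> s)"] in \<open>simp add: Mu_def\<close>)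
    have b2: "\<bar>inner_s (occ K \<pi> s0 t) V\<bar> \<le> MV" for t
      by (rule inner_s_bound[OF os]) (use supnorm_ge[of V] in \<open>simp add: MV_def\<close>)
    have sm: "summable (\<lambda>t. \<gamma>^t * inner_s (occ K \<pi> s0 t) (\<lambda>s. u s (\<pi> s)))"
    proof (rule summable_comparison_test[OF _ summable_mult2[OF summable_geometric[OF gs], of Mu]])
      show "\<exists>N. \<forall>n\<ge>N. norm (\<gamma>^n * inner_s (occ K \<pi> s0 n) (\<lambda>s. u s (\<pi> s))) \<le> \<gamma>^n * Mu"
        using b1 g0 by (auto simp: abs_mult intro!: exI[of _ 0] mult_left_mono)
    qed
    have t1: "(\<lambda>n. \<Sum>t<n. \<gamma>^t * inner_s (occ K \<pi> s0 t) (\<lambda>s. u s (\<pi> s))) \<longlonglongrightarrow> disc_return \<gamma> K \<pi> u s0"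
      using summable_LIMSEQ[OF sm] by (simp add: disc_return_def inner_s_def)
    have t2: "(\<lambda>n. \<gamma>^n * inner_s (occ K \<pi> s0 n) V) \<longlonglongrightarrow> 0"
    proof (rule Lim_null_comparison)
      show "\<forall>\<^sub>F n in sequentially. norm (\<gamma>^n * inner_s (occ K \<pi> s0 n) V) \<le> MV * \<gamma>^n"
      proof (intro always_eventually allI)
        fix n
        have "\<gamma>^n * \<bar>inner_s (occ K \<pi> s0 n) V\<bar> \<le> \<gamma>^n * MV"
          by (rule mult_left_mono[OF b2]) (use g0 in simp)
        then show "norm (\<gamma>^n * inner_s (occ K \<pi> s0 n) V) \<le> MV * \<gamma>^n"
          using g0 by (simp add: abs_mult mult.commute)
      qed
      show "(\<lambda>n. MV * \<gamma>^n) \<longlonglongrightarrow> 0" by (rule tendsto_mult_right_zero[OF LIMSEQ_power_zero[OF gs]])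
    qed
    show ?thesis using tendsto_add[OF t1 t2] unfolding S_def[abs_def] by simp
  qed
  have tel': "S K n - V s0 = (\<Sum>t<n. \<gamma>^t * inner_s (occ K \<pi> s0 t)
        (\<lambda>s. \<gamma> * (inner_s (K t s (\<pi> s)) V - inner_s (pm V s (\<pi> s)) V)))" for K n
  proof -
    have "(\<lambda>s. u s (\<pi> s) + \<gamma> * inner_s (K t s (\<pi> s)) V - V s)
        = (\<lambda>s. \<gamma> * (inner_s (K t s (\<pi> s)) V - inner_s (pm V s (\<pi> s)) V))" for t
      by (rule ext) (subst Vfix, simp add: algebra_simps)
    then show ?thesis unfolding S_def tel by simp
  qed
  have lower: "V s0 \<le> disc_return \<gamma> K \<pi> u s0" if adm: "admissible D \<beta> Po K" for K
  proof (rule LIMSEQ_le_const[OF conv[OF adm]], intro exI allI impI)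
    fix n :: nat
    have os: "occ K \<pi> s0 t \<in> prob_simplex" for t by (rule occ_simplex) (rule adm_simplex[OF adm])
    have "0 \<le> (\<Sum>t<n. \<gamma>^t * inner_s (occ K \<pi> s0 t)
        (\<lambda>s. \<gamma> * (inner_s (K t s (\<pi> s)) V - inner_s (pm V s (\<pi> s)) V)))"
    proof (intro sum_nonneg mult_nonneg_nonneg)
      fix t assume "t \<in> {..<n}"
      show "0 \<le> \<gamma>^t" using g0 by simp
      have "K t s (\<pi> s) \<in> Pset D \<beta> Po s (\<pi> s)" for s using adm by (simp add: admissible_def)
      then have "0 \<le> \<gamma> * (inner_s (K t s (\<pi> s)) V - inner_s (pm V s (\<pi> s)) V)" for s
        using pm_min g0 by simp
      then show "0 \<le> inner_s (occ K \<pi> s0 t) (\<lambda>s. \<gamma> * (inner_s (K t s (\<pi> s)) V - inner_s (pm V s (\<pi> s)) V))"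
        using os[of t] unfolding inner_s_def prob_simplex_def by (auto intro!: sum_nonneg)
    qed
    then show "V s0 \<le> S K n" using tel'[of K n] by simp
  qed
  define Ks where "Ks = (\<lambda>(t::nat) s a. pm V s a)"
  have adms: "admissible D \<beta> Po Ks" by (simp add: admissible_def Ks_def pm_in)
  have "S Ks n = V s0" for n using tel'[of Ks n] by (simp add: Ks_def inner_s_def)
  then have "S Ks = (\<lambda>n. V s0)" by (simp add: fun_eq_iff)
  then have "S Ks \<longlonglongrightarrow> V s0" by simp
  then have eqs: "disc_return \<gamma> Ks \<pi> u s0 = V s0" using conv[OF adms] LIMSEQ_unique by blast
  show "robust_V D \<beta> Po \<gamma> \<pi> u s0 = V s0"
    unfolding robust_V_def
  proof (rule cInf_eq_minimum)
    show "V s0 \<in> {disc_return \<gamma> K \<pi> u s0 |K. admissible D \<beta> Po K}" using eqs adms by force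
  next
    fix x assume "x \<in> {disc_return \<gamma> K \<pi> u s0 |K. admissible D \<beta> Po K}"
    then show "V s0 \<le> x" using lower by blast
  qed
qed

lemma bellman: "robust_V D \<beta> Po \<gamma> \<pi> u s
   = u s (\<pi> s) + \<gamma> * inner_s (pm (robust_V D \<beta> Po \<gamma> \<pi> u) s (\<pi> s)) (robust_V D \<beta> Po \<gamma> \<pi> u)"
proof -
  obtain V where fx: "B \<pi> u V = V" using fix_exists by blast
  show ?thesis using robust_fix[OF fx] fun_cong[OF fx, of s] by (simp add: B_def)
qed

end

theorem proposition3:
  fixes D :: "('s::finite \<Rightarrow> real) \<Rightarrow> ('s \<Rightarrow> real) \<Rightarrow> real"
    and \<beta> :: "'s \<Rightarrow> 'a::finite \<Rightarrow> real"
    and Po :: "'s \<Rightarrow> 'a \<Rightarrow> 's \<Rightarrow> real"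
    and \<gamma> Rbar :: real
    and r :: "'s \<Rightarrow> 'a \<Rightarrow> real"
    and m :: nat
    and g :: "nat \<Rightarrow> 's \<Rightarrow> 'a \<Rightarrow> real"
    and \<tau> lam :: "nat \<Rightarrow> real"
  assumes gamma: "0 \<le> \<gamma>" "\<gamma> < 1"
    and nominal: "\<And>s a. Po s a \<in> prob_simplex"
    and attained: "\<And>s a w. \<exists>p\<in>Pset D \<beta> Po s a.
                      \<forall>q\<in>Pset D \<beta> Po s a. inner_s p w \<le> inner_s q w"
    and r_bnd: "\<And>s a. 0 \<le> r s a \<and> r s a \<le> Rbar"
    and g_bnd: "\<And>i s a. i < m \<Longrightarrow> 0 \<le> g i s a \<and> g i s a \<le> \<tau> i"
    and lam_nonneg: "\<And>i. i < m \<Longrightarrow> 0 \<le> lam i"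
  shows
    "(\<forall>v1 v2. (\<forall>s. v2 s \<le> v1 s) \<longrightarrow>
        (\<forall>\<pi> s. Tpi D \<beta> Po \<gamma> r g m lam \<pi> v2 s \<le> Tpi D \<beta> Po \<gamma> r g m lam \<pi> v1 s) \<and>
        (\<forall>s. Tstar D \<beta> Po \<gamma> r g m lam v2 s \<le> Tstar D \<beta> Po \<gamma> r g m lam v1 s))
     \<and> (\<forall>v c. (\<forall>\<pi> s. Tpi D \<beta> Po \<gamma> r g m lam \<pi> (\<lambda>s'. v s' + c) s
                     = Tpi D \<beta> Po \<gamma> r g m lam \<pi> v s + \<gamma> * c) \<and>
              (\<forall>s. Tstar D \<beta> Po \<gamma> r g m lam (\<lambda>s'. v s' + c) s
                     = Tstar D \<beta> Po \<gamma> r g m lam v s + \<gamma> * c))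
     \<and> (\<forall>v1 v2.
          (\<forall>\<pi>. supnorm (\<lambda>s. Tpi D \<beta> Po \<gamma> r g m lam \<pi> v1 s - Tpi D \<beta> Po \<gamma> r g m lam \<pi> v2 s)
                 \<le> \<gamma> * supnorm (\<lambda>s. v1 s - v2 s)) \<and>
          supnorm (\<lambda>s. Tstar D \<beta> Po \<gamma> r g m lam v1 s - Tstar D \<beta> Po \<gamma> r g m lam v2 s)
                 \<le> \<gamma> * supnorm (\<lambda>s. v1 s - v2 s))
     \<and> (\<forall>\<pi>. let V = (\<lambda>s. robust_V D \<beta> Po \<gamma> \<pi> r s
                          - (\<Sum>i<m. lam i * robust_V D \<beta> Po \<gamma> \<pi> (g i) s))
           in Tpi D \<beta> Po \<gamma> r g m lam \<pi> V = V \<and>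
              (\<forall>v. Tpi D \<beta> Po \<gamma> r g m lam \<pi> v = v \<longrightarrow> v = V))"
proof -
  interpret R: rmdp D \<beta> Po \<gamma> using gamma attained by unfold_locales auto
  let ?T = "Tpi D \<beta> Po \<gamma> r g m lam"
  let ?TS = "Tstar D \<beta> Po \<gamma> r g m lam"
  define C where "C \<pi> s = r s (\<pi> s) - (\<Sum>i<m. lam i * g i s (\<pi> s))
     + \<gamma> * diff_min D \<beta> Po s (\<pi> s) (robust_V D \<beta> Po \<gamma> \<pi> r)
     - \<gamma> * (\<Sum>i<m. lam i * diff_min D \<beta> Po s (\<pi> s) (robust_V D \<beta> Po \<gamma> \<pi> (g i)))" for \<pi> s
  have T: "?T \<pi> v s = C \<pi> s + \<gamma> * inner_s (Po s (\<pi> s)) v" for \<pi> v s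
    by (simp add: Tpi_def C_def)
  have TS: "?TS v s = Max (range (\<lambda>\<pi>. ?T \<pi> v s))" for v s by (simp add: Tstar_def)
  have nn: "0 \<le> Po s a s'" for s a s' using nominal[of s a] by (simp add: prob_simplex_def)
  have mono_pi: "?T \<pi> v2 s \<le> ?T \<pi> v1 s" if "\<forall>s. v2 s \<le> v1 s" for \<pi> v1 v2 s
  proof -
    have "inner_s (Po s (\<pi> s)) v2 \<le> inner_s (Po s (\<pi> s)) v1"
      by (rule inner_s_mono) (use nn that in auto)
    then show ?thesis unfolding T using gamma(1) by (simp add: mult_left_mono)
  qed
  have trans_pi: "?T \<pi> (\<lambda>s'. v s' + c) s = ?T \<pi> v s + \<gamma> * c" for \<pi> v c s
    unfolding T inner_s_const[OF nominal] by (simp add: algebra_simps)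
  have contr_pi: "\<bar>?T \<pi> v1 s - ?T \<pi> v2 s\<bar> \<le> \<gamma> * supnorm (\<lambda>s. v1 s - v2 s)" for \<pi> v1 v2 s
  proof -
    have "?T \<pi> v1 s - ?T \<pi> v2 s = \<gamma> * inner_s (Po s (\<pi> s)) (\<lambda>s. v1 s - v2 s)"
      unfolding T inner_s_diff[symmetric] by (simp add: algebra_simps)
    moreover have "\<bar>inner_s (Po s (\<pi> s)) (\<lambda>s. v1 s - v2 s)\<bar> \<le> supnorm (\<lambda>s. v1 s - v2 s)"
      by (rule inner_s_bound[OF nominal]) (rule supnorm_ge)
    ultimately show ?thesis using gamma(1) by (simp add: abs_mult mult_left_mono)
  qed
  have P1: "\<forall>v1 v2. (\<forall>s. v2 s \<le> v1 s) \<longrightarrow>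
        (\<forall>\<pi> s. ?T \<pi> v2 s \<le> ?T \<pi> v1 s) \<and> (\<forall>s. ?TS v2 s \<le> ?TS v1 s)"
  proof (intro allI impI conjI)
    fix v1 v2 :: "'s \<Rightarrow> real" and \<pi> :: "'s \<Rightarrow> 'a" and s :: 's
    assume h: "\<forall>s. v2 s \<le> v1 s"
    show "?T \<pi> v2 s \<le> ?T \<pi> v1 s" by (rule mono_pi[OF h])
  next
    fix v1 v2 :: "'s \<Rightarrow> real" and s :: 's
    assume h: "\<forall>s. v2 s \<le> v1 s"
    show "?TS v2 s \<le> ?TS v1 s" unfolding TS by (rule Max_range_mono) (rule mono_pi[OF h])
  qed
  have P2: "\<forall>v c. (\<forall>\<pi> s. ?T \<pi> (\<lambda>s'. v s' + c) s = ?T \<pi> v s + \<gamma> * c) \<and>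
              (\<forall>s. ?TS (\<lambda>s'. v s' + c) s = ?TS v s + \<gamma> * c)"
  proof (intro allI conjI)
    fix v :: "'s \<Rightarrow> real" and c :: real and \<pi> :: "'s \<Rightarrow> 'a" and s :: 's
    show "?T \<pi> (\<lambda>s'. v s' + c) s = ?T \<pi> v s + \<gamma> * c" by (rule trans_pi)
  next
    fix v :: "'s \<Rightarrow> real" and c :: real and s :: 's
    show "?TS (\<lambda>s'. v s' + c) s = ?TS v s + \<gamma> * c" unfolding TS trans_pi by (rule Max_range_add)
  qed
  have P3: "\<forall>v1 v2. (\<forall>\<pi>. supnorm (\<lambda>s. ?T \<pi> v1 s - ?T \<pi> v2 s) \<le> \<gamma> * supnorm (\<lambda>s. v1 s - v2 s)) \<and>
          supnorm (\<lambda>s. ?TS v1 s - ?TS v2 s) \<le> \<gamma> * supnorm (\<lambda>s. v1 s - v2 s)"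
  proof (intro allI conjI)
    fix v1 v2 :: "'s \<Rightarrow> real" and \<pi> :: "'s \<Rightarrow> 'a"
    show "supnorm (\<lambda>s. ?T \<pi> v1 s - ?T \<pi> v2 s) \<le> \<gamma> * supnorm (\<lambda>s. v1 s - v2 s)"
      by (rule supnorm_le) (rule contr_pi)
  next
    fix v1 v2 :: "'s \<Rightarrow> real"
    show "supnorm (\<lambda>s. ?TS v1 s - ?TS v2 s) \<le> \<gamma> * supnorm (\<lambda>s. v1 s - v2 s)"
      unfolding TS by (intro supnorm_le Max_range_contr contr_pi)
  qed
  have P4: "let V = (\<lambda>s. robust_V D \<beta> Po \<gamma> \<pi> r s - (\<Sum>i<m. lam i * robust_V D \<beta> Po \<gamma> \<pi> (g i) s))
           in ?T \<pi> V = V \<and> (\<forall>v. ?T \<pi> v = v \<longrightarrow> v = V)" for \<pi>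
  proof -
    define V where "V = (\<lambda>s. robust_V D \<beta> Po \<gamma> \<pi> r s - (\<Sum>i<m. lam i * robust_V D \<beta> Po \<gamma> \<pi> (g i) s))"
    define Vr where "Vr = robust_V D \<beta> Po \<gamma> \<pi> r"
    define Vg where "Vg i = robust_V D \<beta> Po \<gamma> \<pi> (g i)" for i
    have fix1: "?T \<pi> V s = V s" for s
    proof -
      let ?P = "Po s (\<pi> s)"
      define mr where "mr = inner_s (R.pm Vr s (\<pi> s)) Vr"
      define mg where "mg i = inner_s (R.pm (Vg i) s (\<pi> s)) (Vg i)" for i
      have br: "Vr s = r s (\<pi> s) + \<gamma> * mr" unfolding Vr_def mr_def by (rule R.bellman)
      have bg: "Vg i s = g i s (\<pi> s) + \<gamma> * mg i" for i unfolding Vg_def mg_def by (rule R.bellman)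
      have V: "V s = Vr s - (\<Sum>i<m. lam i * Vg i s)" by (simp add: V_def Vr_def Vg_def)
      have iV: "inner_s ?P V = inner_s ?P Vr - (\<Sum>i<m. lam i * inner_s ?P (Vg i))"
        unfolding V_def Vr_def Vg_def by (rule inner_s_sumlin)
      have "?T \<pi> V s = r s (\<pi> s) - (\<Sum>i<m. lam i * g i s (\<pi> s))
         + \<gamma> * (mr - inner_s ?P Vr)
         - \<gamma> * (\<Sum>i<m. lam i * (mg i - inner_s ?P (Vg i)))
         + \<gamma> * (inner_s ?P Vr - (\<Sum>i<m. lam i * inner_s ?P (Vg i)))"
        unfolding T C_def iV R.diff_min_eq mr_def mg_def Vr_def Vg_def by simp
      also have "\<dots> = r s (\<pi> s) + \<gamma> * mr - (\<Sum>i<m. lam i * (g i s (\<pi> s) + \<gamma> * mg i))"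
      proof -
        have s2: "(\<Sum>i<m. lam i * (\<gamma> * mg i)) = \<gamma> * (\<Sum>i<m. lam i * mg i)"
          by (simp add: sum_distrib_left mult_ac)
        show ?thesis
          by (simp only: right_diff_distrib distrib_left sum_subtractf sum.distrib s2)
      qed
      also have "\<dots> = V s" unfolding V br bg ..
      finally show ?thesis .
    qed
    then have fixV: "?T \<pi> V = V" by (rule ext)
    have uniq: "v = V" if hv: "?T \<pi> v = v" for v
    proof -
      have "\<bar>v s - V s\<bar> \<le> \<gamma> * supnorm (\<lambda>s. v s - V s)" for s
      proof -
        have "\<bar>?T \<pi> v s - ?T \<pi> V s\<bar> \<le> \<gamma> * supnorm (\<lambda>s. v s - V s)" by (rule contr_pi)
        then show ?thesis using hv fixV by simp
      qed
      then have "supnorm (\<lambda>s. v s - V s) \<le> \<gamma> * supnorm (\<lambda>s. v s - V s)" by (rule supnorm_le)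
      then have "(1 - \<gamma>) * supnorm (\<lambda>s. v s - V s) \<le> 0" by (simp add: algebra_simps)
      then have "supnorm (\<lambda>s. v s - V s) \<le> 0" using gamma(2) by (simp add: mult_le_0_iff)
      then have "\<bar>v s - V s\<bar> \<le> 0" for s using supnorm_ge[of "\<lambda>s. v s - V s" s] by linarith
      then show ?thesis by (simp add: fun_eq_iff)
    qed
    have "?T \<pi> V = V \<and> (\<forall>v. ?T \<pi> v = v \<longrightarrow> v = V)" using fixV uniq by blast
    then show ?thesis unfolding V_def Let_def .
  qed
  show ?thesis
    apply (intro conjI)
       apply (rule P1)
      apply (rule P2)
     apply (rule P3)
    apply (rule allI)
    apply (rule P4)
    done
qed

end
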